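(* Let $(X,\rho)$ be a metric space, $f:X\to X$ continuous, $x\in X$, $\ell\in\mathbb N$, $n\ge2$ an integer and $\varepsilon>0$. Define $\Delta_\ell$ by \[ C_\ell(x,n,\varepsilon)=\frac1{n^2}\Big[\sum_{l\ge\ell}(l-\ell+1)N_l(x,n,\varepsilon)+n+\Delta_\ell\Big]. \] Then $0\le\Delta_\ell\le2(\ell-1)(n-1)$.
   Context: Bowen metric: $\rho_\ell(y,z)=\max_{0\le i<\ell}\rho(f^iy,f^iz)$. Correlation sum: $C_\ell(x,n,\varepsilon)=n^{-2}\#\{(i,j):0\le i,j<n,\ \rho_\ell(f^ix,f^jx)\le\varepsilon\}$. Recurrence plot $R(x,n,\varepsilon)$: the $n\times n$ matrix indexed by $0\le i,j<n$ with entry $1$ if $\rho(f^ix,f^jx)\le\varepsilon$ and $0$ otherwise. A line of length $\ell$ in it is a triple $(i,j,\ell)$ of integers with $0\le i,j\le n-\ell$, $i\ne j$, entries $(i+k,j+k)$ equal to $1$ for all $0\le k<\ell$, entry $(i-1,j-1)$ equal to $0$ if $\min\{i,j\}>0$, and entry $(i+\ell,j+\ell)$ equal to $0$ if $\max\{i,j\}<n-\ell$. $N_l(x,n,\varepsilon)$ is the number of lines of length exactly $l$ (including lines with $\min\{i,j\}=0$ or $\max\{i,j\}=n-l$). *)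

theory Defs
  imports "HOL-Analysis.Analysis"
begin

text \<open>Bowen metric rho_l(y,z) = max over 0 <= i < l of dist (f^i y) (f^i z) (meant for l >= 1).\<close>
definition bowen_dist :: "('a::metric_space \<Rightarrow> 'a) \<Rightarrow> nat \<Rightarrow> 'a \<Rightarrow> 'a \<Rightarrow> real" where
  "bowen_dist f l y z = Max ((\<lambda>i. dist ((f ^^ i) y) ((f ^^ i) z)) ` {..<l})"

definition corr_sum :: "('a::metric_space \<Rightarrow> 'a) \<Rightarrow> nat \<Rightarrow> 'a \<Rightarrow> nat \<Rightarrow> real \<Rightarrow> real" where
  "corr_sum f l x n eps =
     real (card {(i, j). i < n \<and> j < n \<and> bowen_dist f l ((f ^^ i) x) ((f ^^ j) x) \<le> eps})
     / (real n)^2"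

definition rp_entry :: "('a::metric_space \<Rightarrow> 'a) \<Rightarrow> 'a \<Rightarrow> real \<Rightarrow> nat \<Rightarrow> nat \<Rightarrow> bool" where
  "rp_entry f x eps i j \<longleftrightarrow> dist ((f ^^ i) x) ((f ^^ j) x) \<le> eps"

definition is_line :: "('a::metric_space \<Rightarrow> 'a) \<Rightarrow> 'a \<Rightarrow> nat \<Rightarrow> real \<Rightarrow> nat \<Rightarrow> nat \<Rightarrow> nat \<Rightarrow> bool" where
  "is_line f x n eps i j l \<longleftrightarrow>
     i + l \<le> n \<and> j + l \<le> n \<and> i \<noteq> j \<and>
     (\<forall>k<l. rp_entry f x eps (i + k) (j + k)) \<and>
     (min i j > 0 \<longrightarrow> \<not> rp_entry f x eps (i - 1) (j - 1)) \<and>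
     (max i j < n - l \<longrightarrow> \<not> rp_entry f x eps (i + l) (j + l))"

definition num_lines :: "('a::metric_space \<Rightarrow> 'a) \<Rightarrow> 'a \<Rightarrow> nat \<Rightarrow> real \<Rightarrow> nat \<Rightarrow> nat" where
  "num_lines f x n eps l = card {(i, j). is_line f x n eps i j l}"

end

theory Submission
  imports Defs
begin

lemma funpow_shift: "(f ^^ k) ((f ^^ i) x) = (f ^^ (i + k)) x"
  by (metis add.commute comp_apply funpow_add)

lemma bowen_iff:
  assumes "L \<ge> 1"
  shows "bowen_dist f L ((f ^^ i) x) ((f ^^ j) x) \<le> eps \<longleftrightarrow> (\<forall>k<L. rp_entry f x eps (i + k) (j + k))"
proof -
  have ne: "(\<lambda>k. dist ((f ^^ k) ((f ^^ i) x)) ((f ^^ k) ((f ^^ j) x))) ` {..<L} \<noteq> {}"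
  proof -
    have "0 \<in> {..<L}" using assms by simp
    thus ?thesis by blast
  qed
  show ?thesis
    unfolding bowen_dist_def rp_entry_def
    using Max_le_iff[OF _ ne, of eps] by (simp add: funpow_shift) blast
qed

lemma line_unique_start:
  assumes l1: "is_line f x n eps i j l" and l2: "is_line f x n eps i' j' l'"
    and d: "i + j' = i' + j" and a: "i' \<le> a" "a < i + l"
  shows "\<not> i < i'"
proof
  assume lt: "i < i'"
  have "min i' j' > 0" using lt d by auto
  hence "\<not> rp_entry f x eps (i' - 1) (j' - 1)" using l2 unfolding is_line_def by blast
  moreover have "i' - 1 - i < l" using lt a by linarith
  hence "rp_entry f x eps (i + (i' - 1 - i)) (j + (i' - 1 - i))" using l1 unfolding is_line_def by blast
  moreover have "i + (i' - 1 - i) = i' - 1" "j + (i' - 1 - i) = j' - 1" using lt d by auto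
  ultimately show False by simp
qed

lemma line_unique_len:
  assumes l1: "is_line f x n eps i j l" and l2: "is_line f x n eps i j l'"
  shows "\<not> l < l'"
proof
  assume lt: "l < l'"
  have "rp_entry f x eps (i + l) (j + l)" using l2 lt unfolding is_line_def by blast
  moreover have "i + l' \<le> n" "j + l' \<le> n" using l2 unfolding is_line_def by auto
  hence "max i j < n - l" using lt by arith
  ultimately show False using l1 unfolding is_line_def by blast
qed

lemma line_unique:
  assumes l1: "is_line f x n eps i j l" and l2: "is_line f x n eps i' j' l'"
    and d: "i + j' = i' + j" and a: "i \<le> a" "a < i + l" "i' \<le> a" "a < i' + l'"
  shows "i = i' \<and> j = j' \<and> l = l'"
proof -
  have "\<not> i < i'" using line_unique_start[OF l1 l2 d] a by blast
  moreover have "\<not> i' < i" using line_unique_start[OF l2 l1 _] d a by force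
  ultimately have ii: "i = i'" by simp
  hence jj: "j = j'" using d by simp
  have "\<not> l < l'" using line_unique_len[OF l1] l2 ii jj by blast
  moreover have "\<not> l' < l" using line_unique_len[OF _ l1] l2 ii jj by blast
  ultimately show ?thesis using ii jj by simp
qed

lemma line_exists:
  "i0 \<noteq> j0 \<Longrightarrow> i0 + m \<le> n \<Longrightarrow> j0 + m \<le> n \<Longrightarrow> (\<forall>k<m. rp_entry f x eps (i0 + k) (j0 + k))
   \<Longrightarrow> \<exists>i j l. is_line f x n eps i j l \<and> i \<le> i0 \<and> j \<le> j0 \<and> i0 - i = j0 - j \<and> i0 + m \<le> i + l"
proof (induction "i0 + (n - (i0 + m))" arbitrary: i0 j0 m rule: less_induct)
  case less
  show ?case
  proof (cases "min i0 j0 > 0 \<and> rp_entry f x eps (i0 - 1) (j0 - 1)")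
    case True
    have ent: "\<forall>k<m+1. rp_entry f x eps (i0 - 1 + k) (j0 - 1 + k)"
    proof (intro allI impI)
      fix k assume "k < m + 1"
      show "rp_entry f x eps (i0 - 1 + k) (j0 - 1 + k)"
      proof (cases k)
        case 0 thus ?thesis using True by simp
      next
        case (Suc k')
        hence "i0 - 1 + k = i0 + k'" "j0 - 1 + k = j0 + k'" using True by auto
        thus ?thesis using less.prems(4) \<open>k < m+1\<close> Suc by simp
      qed
    qed
    have "i0 - 1 + (n - (i0 - 1 + (m + 1))) < i0 + (n - (i0 + m))" using True by auto
    moreover have "i0 - 1 \<noteq> j0 - 1" "i0 - 1 + (m + 1) \<le> n" "j0 - 1 + (m + 1) \<le> n"
      using less.prems True by auto
    ultimately have "\<exists>i j l. is_line f x n eps i j l \<and> i \<le> i0 - 1 \<and> j \<le> j0 - 1 \<and> i0 - 1 - i = j0 - 1 - j \<and> i0 - 1 + (m + 1) \<le> i + l"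
      using less.hyps ent by blast
    then obtain i j l where "is_line f x n eps i j l" "i \<le> i0 - 1" "j \<le> j0 - 1"
      "i0 - 1 - i = j0 - 1 - j" "i0 - 1 + (m + 1) \<le> i + l" by auto
    thus ?thesis using True by (intro exI[of _ i] exI[of _ j] exI[of _ l]) auto
  next
    case F1: False
    show ?thesis
    proof (cases "max i0 j0 < n - m \<and> rp_entry f x eps (i0 + m) (j0 + m)")
      case True
      have ent: "\<forall>k<m+1. rp_entry f x eps (i0 + k) (j0 + k)"
        using less.prems(4) True less_Suc_eq by auto
      have "i0 + (n - (i0 + (m + 1))) < i0 + (n - (i0 + m))" using True by auto
      moreover have "i0 + (m + 1) \<le> n" "j0 + (m + 1) \<le> n"
        using less.prems True by auto
      ultimately have "\<exists>i j l. is_line f x n eps i j l \<and> i \<le> i0 \<and> j \<le> j0 \<and> i0 - i = j0 - j \<and> i0 + (m + 1) \<le> i + l"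
        using less.hyps ent less.prems(1) by blast
      then obtain i j l where "is_line f x n eps i j l" "i \<le> i0" "j \<le> j0"
        "i0 - i = j0 - j" "i0 + (m + 1) \<le> i + l" by auto
      thus ?thesis by (intro exI[of _ i] exI[of _ j] exI[of _ l]) auto
    next
      case False
      have "is_line f x n eps i0 j0 m" unfolding is_line_def using less.prems F1 False by auto
      thus ?thesis by (intro exI[of _ i0] exI[of _ j0] exI[of _ m]) auto
    qed
  qed
qed

lemma S_unique:
  assumes L: "L \<ge> 1" and l1: "is_line f x n eps i j l" and l2: "is_line f x n eps i' j' l'"
    and "L \<le> l" "L \<le> l'"
    and c: "c \<in> (\<lambda>t. (i + t, j + t)) ` {..l - L}" "c \<in> (\<lambda>t. (i' + t, j' + t)) ` {..l' - L}"
  shows "i = i' \<and> j = j' \<and> l = l'"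
proof -
  obtain t t' where t: "t \<le> l - L" "t' \<le> l' - L" "i + t = i' + t'" "j + t = j' + t'"
    using c by auto
  show ?thesis
    apply (rule line_unique[OF l1 l2, of "i + t"])
    using t assms by auto
qed

lemma card_P:
  assumes L: "L \<ge> 1"
  shows "card {(p, q). p \<noteq> q \<and> p + L \<le> n \<and> q + L \<le> n \<and> (\<forall>k<L. rp_entry f x eps (p + k) (q + k))}
    = (\<Sum>l\<in>{L..n}. (l - L + 1) * num_lines f x n eps l)"
proof -
  define LS where "LS l = {(i, j). is_line f x n eps i j l}" for l
  define S where "S l = (\<lambda>(i, j). (\<lambda>t. (i + t, j + t)) ` {..l - L})" for l
  define P where "P = {(p, q). p \<noteq> q \<and> p + L \<le> n \<and> q + L \<le> n \<and> (\<forall>k<L. rp_entry f x eps (p + k) (q + k))}"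
  have finLS: "finite (LS l)" for l
  proof -
    have "LS l \<subseteq> {..n} \<times> {..n}" unfolding LS_def is_line_def by auto
    thus ?thesis using finite_subset by blast
  qed
  have cardS: "card (S l p) = l - L + 1" for l p
  proof -
    obtain i j where p: "p = (i, j)" by force
    have "inj_on (\<lambda>t. (i + t, j + t)) {..l - L}" by (auto simp: inj_on_def)
    thus ?thesis unfolding S_def p by (simp add: card_image)
  qed
  have finS: "finite (S l p)" for l p
    unfolding S_def by (auto split: prod.splits)
  have inner: "card (\<Union>p\<in>LS l. S l p) = (l - L + 1) * num_lines f x n eps l" if "L \<le> l" for l
  proof -
    have "card (\<Union>p\<in>LS l. S l p) = (\<Sum>p\<in>LS l. card (S l p))"
    proof (rule card_UN_disjoint[OF finLS])
      show "\<forall>p\<in>LS l. finite (S l p)" using finS by blast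
      show "\<forall>p\<in>LS l. \<forall>p'\<in>LS l. p \<noteq> p' \<longrightarrow> S l p \<inter> S l p' = {}"
      proof (intro ballI impI)
        fix p p' assume pp: "p \<in> LS l" "p' \<in> LS l" "p \<noteq> p'"
        obtain i j i' j' where e: "p = (i, j)" "p' = (i', j')" by force
        show "S l p \<inter> S l p' = {}"
        proof (rule ccontr)
          assume "S l p \<inter> S l p' \<noteq> {}"
          then obtain c where "c \<in> S l p" "c \<in> S l p'" by blast
          hence "i = i' \<and> j = j' \<and> l = l"
            using S_unique[OF L, of f x n eps i j l i' j' l c] pp e that
            unfolding S_def LS_def by auto
          thus False using pp e by simp
        qed
      qed
    qed
    also have "\<dots> = (l - L + 1) * num_lines f x n eps l"
      by (simp add: cardS num_lines_def LS_def)
    finally show ?thesis .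
  qed
  have "P = (\<Union>l\<in>{L..n}. \<Union>p\<in>LS l. S l p)"
  proof
    show "P \<subseteq> (\<Union>l\<in>{L..n}. \<Union>p\<in>LS l. S l p)"
    proof
      fix c assume "c \<in> P"
      then obtain p q where c: "c = (p, q)" "p \<noteq> q" "p + L \<le> n" "q + L \<le> n"
        "\<forall>k<L. rp_entry f x eps (p + k) (q + k)" unfolding P_def by auto
      from line_exists[OF c(2-5)] obtain i j l where
        ln: "is_line f x n eps i j l" "i \<le> p" "j \<le> q" "p - i = q - j" "p + L \<le> i + l" by blast
      have ll: "L \<le> l" "l \<le> n" using ln unfolding is_line_def by auto
      have "c = (i + (p - i), j + (p - i))" using c ln by auto
      moreover have "p - i \<le> l - L" using ln by auto
      ultimately have "c \<in> S l (i, j)" unfolding S_def by auto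
      moreover have "(i, j) \<in> LS l" using ln unfolding LS_def by auto
      ultimately show "c \<in> (\<Union>l\<in>{L..n}. \<Union>p\<in>LS l. S l p)" using ll by auto
    qed
    show "(\<Union>l\<in>{L..n}. \<Union>p\<in>LS l. S l p) \<subseteq> P"
    proof
      fix c assume "c \<in> (\<Union>l\<in>{L..n}. \<Union>p\<in>LS l. S l p)"
      then obtain l i j t where h: "L \<le> l" "is_line f x n eps i j l" "t \<le> l - L" "c = (i + t, j + t)"
        unfolding S_def LS_def by auto
      have "\<forall>k<L. rp_entry f x eps (i + t + k) (j + t + k)"
      proof (intro allI impI)
        fix k assume "k < L"
        hence "t + k < l" using h by auto
        thus "rp_entry f x eps (i + t + k) (j + t + k)" using h(2) unfolding is_line_def
          by (metis add.assoc)
      qed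
      thus "c \<in> P" using h unfolding P_def is_line_def by auto
    qed
  qed
  hence "card P = (\<Sum>l\<in>{L..n}. card (\<Union>p\<in>LS l. S l p))"
  proof (simp, intro card_UN_disjoint)
    show "finite {L..n}" by simp
    show "\<forall>l\<in>{L..n}. finite (\<Union>p\<in>LS l. S l p)" using finLS finS by blast
    show "\<forall>l\<in>{L..n}. \<forall>l'\<in>{L..n}. l \<noteq> l' \<longrightarrow> (\<Union>p\<in>LS l. S l p) \<inter> (\<Union>p\<in>LS l'. S l' p) = {}"
    proof (intro ballI impI)
      fix l l' assume ll: "l \<in> {L..n}" "l' \<in> {L..n}" "l \<noteq> l'"
      show "(\<Union>p\<in>LS l. S l p) \<inter> (\<Union>p\<in>LS l'. S l' p) = {}"
      proof (rule ccontr)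
        assume "(\<Union>p\<in>LS l. S l p) \<inter> (\<Union>p\<in>LS l'. S l' p) \<noteq> {}"
        then obtain c i j i' j' where "(i, j) \<in> LS l" "(i', j') \<in> LS l'" "c \<in> S l (i, j)" "c \<in> S l' (i', j')"
          by force
        hence "i = i' \<and> j = j' \<and> l = l'"
          using S_unique[OF L, of f x n eps i j l i' j' l' c] ll
          unfolding S_def LS_def by auto
        thus False using ll by simp
      qed
    qed
  qed
  also have "\<dots> = (\<Sum>l\<in>{L..n}. (l - L + 1) * num_lines f x n eps l)"
    by (rule sum.cong) (auto simp: inner)
  finally show ?thesis unfolding P_def .
qed

theorem mainTheorem6:
  fixes f :: "'a::metric_space \<Rightarrow> 'a" and x :: 'a and L n :: nat and eps :: real
  assumes "continuous_on UNIV f"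
    and "L \<ge> 1"
    and "n \<ge> 2"
    and "eps > 0"
  shows "let D = (real n)^2 * corr_sum f L x n eps
                 - (\<Sum>l\<in>{L..n}. real (l - L + 1) * real (num_lines f x n eps l))
                 - real n
         in 0 \<le> D \<and> D \<le> 2 * (real L - 1) * (real n - 1)"
proof -
  let ?R = "rp_entry f x eps"
  define B where "B = {(i, j). i < n \<and> j < n \<and> bowen_dist f L ((f ^^ i) x) ((f ^^ j) x) \<le> eps}"
  define Dg where "Dg = (\<lambda>i. (i, i)) ` {..<n}"
  define P where "P = {(p, q). p \<noteq> q \<and> p + L \<le> n \<and> q + L \<le> n \<and> (\<forall>k<L. ?R (p + k) (q + k))}"
  define Q where "Q = {(p, q). p < n \<and> q < n \<and> p \<noteq> q \<and> \<not> (p + L \<le> n \<and> q + L \<le> n) \<and> (\<forall>k<L. ?R (p + k) (q + k))}"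
  have Bw: "bowen_dist f L ((f ^^ i) x) ((f ^^ j) x) \<le> eps \<longleftrightarrow> (\<forall>k<L. ?R (i + k) (j + k))" for i j
    using bowen_iff[OF assms(2)] .
  have B_eq: "B = Dg \<union> P \<union> Q"
  proof -
    have "?R i i" for i unfolding rp_entry_def using assms(4) by simp
    thus ?thesis unfolding B_def Dg_def P_def Q_def using Bw assms(2) by fastforce
  qed
  have fin: "finite Dg" "finite P" "finite Q"
  proof -
    show "finite Dg" unfolding Dg_def by simp
    have "P \<subseteq> {..n} \<times> {..n}" "Q \<subseteq> {..n} \<times> {..n}" unfolding P_def Q_def by auto
    thus "finite P" "finite Q" using finite_subset by blast+
  qed
  have cB: "card B = n + card P + card Q"
  proof -
    have "card B = card (Dg \<union> P) + card Q"
      unfolding B_eq by (rule card_Un_disjoint) (use fin in \<open>auto simp: Dg_def P_def Q_def\<close>)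
    also have "card (Dg \<union> P) = card Dg + card P"
      by (rule card_Un_disjoint) (use fin in \<open>auto simp: Dg_def P_def\<close>)
    also have "card Dg = n" unfolding Dg_def by (simp add: card_image inj_on_def)
    finally show ?thesis by simp
  qed
  have cP: "card P = (\<Sum>l\<in>{L..n}. (l - L + 1) * num_lines f x n eps l)"
    unfolding P_def using card_P[OF assms(2)] .
  define I where "I = {i. i < n \<and> n < i + L}"
  have cI: "card I \<le> L - 1"
  proof -
    have "I \<subseteq> {n + 1 - L..<n}" unfolding I_def by auto
    hence "card I \<le> card {n + 1 - L..<n}" by (intro card_mono) auto
    thus ?thesis by simp
  qed
  define A1 where "A1 = Sigma I (\<lambda>i. {..<n} - {i})"
  have finI: "finite I" unfolding I_def by simp
  have finA1: "finite A1" unfolding A1_def using finI by simp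
  have cA1: "card A1 \<le> (L - 1) * (n - 1)"
  proof -
    have "card A1 = (\<Sum>i\<in>I. card ({..<n} - {i}))" unfolding A1_def
      using finI by (simp add: card_SigmaI)
    also have "\<dots> = card I * (n - 1)" by (simp add: I_def)
    also have "\<dots> \<le> (L - 1) * (n - 1)" using cI by simp
    finally show ?thesis .
  qed
  have cA2: "card (prod.swap ` A1) \<le> (L - 1) * (n - 1)"
    using cA1 card_image_le[OF finA1, of prod.swap] by linarith
  have "Q \<subseteq> A1 \<union> prod.swap ` A1"
  proof
    fix c assume "c \<in> Q"
    then obtain p q where c: "c = (p, q)" "p < n" "q < n" "p \<noteq> q" "n < p + L \<or> n < q + L"
      unfolding Q_def by auto
    show "c \<in> A1 \<union> prod.swap ` A1"
    proof (cases "n < p + L")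
      case True thus ?thesis using c unfolding A1_def I_def by auto
    next
      case False
      hence "(q, p) \<in> A1" using c unfolding A1_def I_def by auto
      hence "prod.swap (q, p) \<in> prod.swap ` A1" by blast
      thus ?thesis using c by simp
    qed
  qed
  hence "card Q \<le> card (A1 \<union> prod.swap ` A1)"
    by (intro card_mono) (auto simp: finA1)
  also have "\<dots> \<le> card A1 + card (prod.swap ` A1)" by (rule card_Un_le)
  finally have cQ: "card Q \<le> 2 * ((L - 1) * (n - 1))" using cA1 cA2 by linarith
  have n0: "real n \<noteq> 0" using assms(3) by simp
  have e1: "(real n)^2 * corr_sum f L x n eps = real (card B)"
    unfolding corr_sum_def B_def using n0 by simp
  have e2: "(\<Sum>l\<in>{L..n}. real (l - L + 1) * real (num_lines f x n eps l)) = real (card P)"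
    unfolding cP of_nat_sum of_nat_mult by (rule sum.cong) auto
  have D: "(real n)^2 * corr_sum f L x n eps
                 - (\<Sum>l\<in>{L..n}. real (l - L + 1) * real (num_lines f x n eps l))
                 - real n = real (card Q)"
    unfolding e1 e2 cB by simp
  have "real (card Q) \<le> real (2 * ((L - 1) * (n - 1)))" using cQ by linarith
  also have "\<dots> = 2 * (real L - 1) * (real n - 1)" using assms(2,3) by (simp add: of_nat_diff)
  finally show ?thesis unfolding D Let_def by simp
qed

end
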